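(* For integers $M\ge1$ and $0\le b\le M$, let $H_{M,b}$ be the number of Sturmian factors of length $M$ (over $\{0,1\}$) containing at least $b$ letters $1$. Then for every $\delta>0$ there is a constant $K_\delta$ (independent of $M$ and $b$) such that \[ H_{M,b}\ge\frac{1}{\pi^2}(M-b)M^2-K_\delta M^{2+\delta}. \]
   Context: A Sturmian word over $\{0,1\}$ is a bi-infinite word $(u_n)_{n\in\mathbb{Z}}$ with $u_n=\lfloor (n+1)\alpha+\beta\rfloor-\lfloor n\alpha+\beta\rfloor$ for all $n$, or $u_n=\lceil (n+1)\alpha+\beta\rceil-\lceil n\alpha+\beta\rceil$ for all $n$, where $\alpha\in(0,1)$ is irrational and $\beta\in[0,1)$. A Sturmian factor is a finite word occurring as a block of consecutive letters in some Sturmian word. *)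

theory Defs
  imports Complex_Main
begin

text \<open>Bi-infinite words over the alphabet {0,1} are modelled as functions int => int.\<close>

definition sturmian_word :: "(int \<Rightarrow> int) \<Rightarrow> bool" where
  "sturmian_word u \<longleftrightarrow>
     (\<exists>\<alpha> \<beta> :: real. 0 < \<alpha> \<and> \<alpha> < 1 \<and> \<alpha> \<notin> \<rat> \<and> 0 \<le> \<beta> \<and> \<beta> < 1 \<and>
        ((\<forall>n. u n = \<lfloor>(of_int n + 1) * \<alpha> + \<beta>\<rfloor> - \<lfloor>of_int n * \<alpha> + \<beta>\<rfloor>) \<or>
         (\<forall>n. u n = \<lceil>(of_int n + 1) * \<alpha> + \<beta>\<rceil> - \<lceil>of_int n * \<alpha> + \<beta>\<rceil>)))"

definition sturmian_factor :: "int list \<Rightarrow> bool" where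
  "sturmian_factor w \<longleftrightarrow>
     (\<exists>u k. sturmian_word u \<and> w = map (\<lambda>i. u (k + int i)) [0..<length w])"

definition H :: "nat \<Rightarrow> nat \<Rightarrow> nat" where
  "H M b = card {w. sturmian_factor w \<and> length w = M \<and> b \<le> length (filter (\<lambda>x. x = 1) w)}"

end

theory Submission
  imports Defs "HOL-Analysis.Analysis" "HOL-Computational_Algebra.Squarefree"
begin

definition mu :: "nat \<Rightarrow> int" where
  "mu n = (if squarefree n then (-1) ^ card (prime_factors n) else 0)"

lemma mu_1 [simp]: "mu 1 = 1" by (simp add: mu_def)

lemma abs_mu_le: "\<bar>mu n\<bar> \<le> 1" by (simp add: mu_def)

lemma mu_prime_mult_dvd:
  assumes "prime p" "p dvd e" shows "mu (p * e) = 0"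
proof -
  have "p ^ 2 dvd p * e" using assms(2) by (auto simp: power2_eq_square)
  hence "\<not> squarefree (p * e)" using assms(1)
    by (meson not_squarefreeI not_prime_unit)
  thus ?thesis by (simp add: mu_def)
qed

lemma mu_prime_mult_coprime:
  assumes "prime p" "\<not> p dvd e" "e > 0" shows "mu (p * e) = - mu e"
proof -
  have cop: "coprime p e" using assms prime_imp_coprime by blast
  have sq: "squarefree (p * e) \<longleftrightarrow> squarefree e"
    using squarefree_mult_coprime[OF cop] squarefree_prime[OF assms(1)]
      squarefree_mono[of e "p*e"] by auto
  have pf: "prime_factors (p * e) = insert p (prime_factors e)"
    using assms by (simp add: prime_factors_product prime_prime_factors)
  have "p \<notin> prime_factors e" using assms(2) by (auto simp: in_prime_factors_iff)
  hence "card (prime_factors (p * e)) = Suc (card (prime_factors e))"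
    using pf by simp
  thus ?thesis using sq by (simp add: mu_def)
qed

lemma mu_divisor_sum:
  assumes "n > 0"
  shows "(\<Sum>d\<in>{d. d dvd n}. mu d) = (if n = 1 then 1 else 0)"
proof (cases "n = 1")
  case True thus ?thesis by (simp add: mu_def)
next
  case False
  then obtain p where p: "prime p" "p dvd n" using assms
    by (metis prime_factor_nat)
  obtain k where nk: "n = p * k" using p by blast
  have k0: "k > 0" using assms nk by auto
  have fin: "finite {d. d dvd n}" using assms by simp
  let ?A = "{d. d dvd n \<and> \<not> p dvd d}"
  let ?B = "{d. d dvd n \<and> p dvd d}"
  have split: "(\<Sum>d\<in>{d. d dvd n}. mu d) = (\<Sum>d\<in>?A. mu d) + (\<Sum>d\<in>?B. mu d)"
  proof -
    have "{d. d dvd n} = ?A \<union> ?B" by auto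
    moreover have "?A \<inter> ?B = {}" by auto
    ultimately show ?thesis using fin
      by (metis (no_types, lifting) finite_Un sum.union_disjoint)
  qed
  have B: "(\<Sum>d\<in>?B. mu d) = (\<Sum>e\<in>{e. e dvd k}. mu (p * e))"
  proof (rule sum.reindex_bij_witness[of _ "\<lambda>e. p * e" "\<lambda>d. d div p"])
    show "\<And>a. a \<in> {e. e dvd k} \<Longrightarrow> (p * a) div p = a" using p by auto
    show "\<And>a. a \<in> {e. e dvd k} \<Longrightarrow> p * a \<in> ?B" using nk by auto
    show "\<And>b. b \<in> ?B \<Longrightarrow> p * (b div p) = b" by auto
    show "\<And>b. b \<in> ?B \<Longrightarrow> b div p \<in> {e. e dvd k}"
      using nk p by (auto simp: prime_gt_0_nat elim!: dvdE)
    show "\<And>b. b \<in> ?B \<Longrightarrow> mu (p * (b div p)) = mu b" by auto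
  qed
  have fink: "finite {e. e dvd k}" using k0 by simp
  have B2: "(\<Sum>e\<in>{e. e dvd k}. mu (p * e)) = (\<Sum>e\<in>{e. e dvd k \<and> \<not> p dvd e}. - mu e)"
  proof -
    have "(\<Sum>e\<in>{e. e dvd k}. mu (p * e)) = (\<Sum>e\<in>{e. e dvd k \<and> \<not> p dvd e}. mu (p * e))"
      by (rule sum.mono_neutral_right) (use fink p mu_prime_mult_dvd in auto)
    also have "\<dots> = (\<Sum>e\<in>{e. e dvd k \<and> \<not> p dvd e}. - mu e)"
      by (rule sum.cong) (use p mu_prime_mult_coprime k0 in \<open>auto intro!: mu_prime_mult_coprime dest: dvd_pos_nat\<close>)
    finally show ?thesis .
  qed
  have AB: "?A = {e. e dvd k \<and> \<not> p dvd e}"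
  proof -
    have "d dvd k" if "d dvd p * k" "\<not> p dvd d" for d
    proof -
      have "coprime d p" using that p prime_imp_coprime by (metis coprime_commute)
      thus ?thesis using that(1) by (metis coprime_dvd_mult_right_iff)
    qed
    thus ?thesis using nk by auto
  qed
  show ?thesis using split B B2 AB False by (simp add: sum_negf)
qed


definition Z :: "nat \<Rightarrow> real" where
  "Z k = (\<Sum>i<k. 1 / (real i + 1)^2)"

lemma basel: "(\<lambda>n. 1 / (real n + 1)^2) sums (pi^2 / 6)"
  using inverse_squares_sums by (simp add: add.commute)

lemma Z_le: "Z k \<le> pi^2 / 6"
  unfolding Z_def using basel
  by (metis (no_types, lifting) sum_le_suminf sums_summable sums_unique finite_lessThan
      divide_nonneg_nonneg zero_le_one zero_le_power2)

lemma Z_step: assumes k: "k \<ge> 1" and kN: "k \<le> N" shows "Z N \<le> Z k + 1 / real k - 1 / real N"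
  using kN
proof (induction N rule: dec_induct)
  case base thus ?case by simp
next
  case (step n)
  have "Z (Suc n) = Z n + 1 / (real n + 1)^2" by (simp add: Z_def)
  also have "1 / (real n + 1)^2 \<le> 1 / real n - 1 / real (Suc n)"
  proof -
    have n1: "real n \<ge> 1" using step k by simp
    have "1 / real n - 1 / real (Suc n) = 1 / (real n * (real n + 1))"
      using n1 by (simp add: field_simps)
    also have "1 / (real n + 1)^2 \<le> 1 / (real n * (real n + 1))"
      using n1 by (intro divide_left_mono) (auto simp: power2_eq_square intro!: mult_right_mono)
    finally show ?thesis
      by (simp add: algebra_simps)
  qed
  finally show ?case using step by linarith
qed

lemma Z_tail: "k \<ge> 1 \<Longrightarrow> pi^2 / 6 \<le> Z k + 1 / real k"
proof -
  assume k: "k \<ge> 1"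
  have lim: "Z \<longlonglongrightarrow> pi^2/6" using basel unfolding sums_def Z_def by simp
  show ?thesis
  proof (rule LIMSEQ_le_const2[OF lim])
    show "\<exists>N. \<forall>n\<ge>N. Z n \<le> Z k + 1 / real k"
      using Z_step[OF k] by (intro exI[of _ k]) (smt (verit) of_nat_0_le_iff divide_nonneg_nonneg)
  qed
qed

lemma Z_alt: "Z m = (\<Sum>n\<in>{1..m}. 1 / (real n)^2)"
  unfolding Z_def
  by (rule sum.reindex_bij_witness[of _ "\<lambda>n. n - 1" Suc]) auto

lemma mu_Z_identity:
  assumes "M \<ge> 1"
  shows "(\<Sum>d\<in>{1..M}. real_of_int (mu d) / (real d)^2 * Z (M div d)) = 1"
proof -
  have "(\<Sum>d\<in>{1..M}. real_of_int (mu d) / (real d)^2 * Z (M div d))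
      = (\<Sum>d\<in>{1..M}. \<Sum>n\<in>{1..M div d}. real_of_int (mu d) / (real (d * n))^2)"
    by (simp add: Z_alt sum_distrib_left power_mult_distrib)
  also have "\<dots> = (\<Sum>(d,n)\<in>Sigma {1..M} (\<lambda>d. {1..M div d}). real_of_int (mu d) / (real (d * n))^2)"
    by (rule sum.Sigma) auto
  also have "\<dots> = (\<Sum>(N,d)\<in>Sigma {1..M} (\<lambda>N. {d. d dvd N}). real_of_int (mu d) / (real N)^2)"
  proof (rule sum.reindex_bij_witness[of _ "\<lambda>(N,d). (d, N div d)" "\<lambda>(d,n). (d*n, d)"])
    fix x assume x: "x \<in> Sigma {1..M} (\<lambda>d. {1..M div d})"
    then obtain d n where dn: "x = (d,n)" "1 \<le> d" "d \<le> M" "1 \<le> n" "n \<le> M div d" by auto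
    have "d * n \<le> M" using dn less_eq_div_iff_mult_less_eq[of d n M] by (simp add: mult.commute)
    moreover have "d * n \<ge> 1" using dn by simp
    ultimately show "(case (case x of (d, n) \<Rightarrow> (d * n, d)) of (N, d) \<Rightarrow> (d, N div d)) = x"
      and "(case x of (d, n) \<Rightarrow> (d * n, d)) \<in> Sigma {1..M} (\<lambda>N. {d. d dvd N})"
      and "(case (case x of (d, n) \<Rightarrow> (d * n, d)) of (N, d) \<Rightarrow> real_of_int (mu d) / (real N)\<^sup>2) =
         (case x of (d, n) \<Rightarrow> real_of_int (mu d) / (real (d * n))\<^sup>2)"
      using dn by auto
  next
    fix y assume y: "y \<in> Sigma {1..M} (\<lambda>N. {d. d dvd N})"
    then obtain N d where Nd: "y = (N,d)" "1 \<le> N" "N \<le> M" "d dvd N" by auto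
    then obtain n where n: "N = d * n" by blast
    have "d \<ge> 1" "n \<ge> 1" using Nd n by (auto intro: Nat.gr0I)
    moreover have "n \<le> M div d" using Nd n \<open>d \<ge> 1\<close>
      by (metis div_le_mono nonzero_mult_div_cancel_left not_one_le_zero)
    moreover have "d \<le> M" using Nd n \<open>n \<ge> 1\<close> by (metis dvd_imp_le le_trans not_one_le_zero zero_less_iff_neq_zero)
    ultimately show "(case (case y of (N, d) \<Rightarrow> (d, N div d)) of (d, n) \<Rightarrow> (d * n, d)) = y"
      and "(case y of (N, d) \<Rightarrow> (d, N div d)) \<in> Sigma {1..M} (\<lambda>d. {1..M div d})"
      using Nd n by auto
  qed
  also have "\<dots> = (\<Sum>N\<in>{1..M}. \<Sum>d\<in>{d. d dvd N}. real_of_int (mu d) / (real N)^2)"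
    by (rule sum.Sigma[symmetric]) auto
  also have "\<dots> = (\<Sum>N\<in>{1..M}. real_of_int (\<Sum>d\<in>{d. d dvd N}. mu d) / (real N)^2)"
    by (simp add: sum_divide_distrib)
  also have "\<dots> = (\<Sum>N\<in>{1..M}. if N = 1 then 1 else 0)"
    by (rule sum.cong) (auto simp: mu_divisor_sum)
  also have "\<dots> = 1" using assms by simp
  finally show ?thesis .
qed


lemma harm_eq: "(\<Sum>d\<in>{1..M}. 1 / real d) = harm M"
  by (simp add: harm_def divide_inverse)

lemma harm_le_ln: "M \<ge> 1 \<Longrightarrow> (harm M :: real) \<le> ln (real M) + 1"
  using euler_mascheroni_sequence_decreasing[of 1 M] by (simp add: harm_def)

lemma div_bound: assumes "1 \<le> d" "d \<le> (M::nat)" shows "real M \<le> 2 * real d * real (M div d)"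
proof -
  have a: "M = d * (M div d) + M mod d" by simp
  have b: "M mod d < d" using assms by simp
  have c: "M div d \<ge> 1" using assms by (simp add: Suc_le_eq div_greater_zero_iff)
  have "d * 1 \<le> d * (M div d)" using c by (rule mult_le_mono2)
  hence "M \<le> 2 * (d * (M div d))" using a b by linarith
  hence "real M \<le> 2 * (real d * real (M div d))" by (metis of_nat_le_iff of_nat_mult of_nat_numeral)
  thus ?thesis by simp
qed

lemma G_lower:
  assumes M: "M \<ge> 1"
  shows "pi^2/6 * (\<Sum>d\<in>{1..M}. real_of_int (mu d) / (real d)^2) \<ge> 1 - 2 * harm M / real M"
proof -
  have eq1: "pi^2/6 * (\<Sum>d\<in>{1..M}. real_of_int (mu d) / (real d)^2)
      = (\<Sum>d\<in>{1..M}. real_of_int (mu d) / (real d)^2 * Z (M div d))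
        + (\<Sum>d\<in>{1..M}. real_of_int (mu d) / (real d)^2 * (pi^2/6 - Z (M div d)))"
  proof -
    have "pi^2/6 * (\<Sum>d\<in>{1..M}. real_of_int (mu d) / (real d)^2)
       = (\<Sum>d\<in>{1..M}. real_of_int (mu d) / (real d)^2 * Z (M div d) + real_of_int (mu d) / (real d)^2 * (pi^2/6 - Z (M div d)))"
      unfolding sum_distrib_left by (rule sum.cong) (simp_all add: algebra_simps)
    thus ?thesis by (simp only: sum.distrib)
  qed
  have eq2: "(\<Sum>d\<in>{1..M}. real_of_int (mu d) / (real d)^2 * Z (M div d)) = 1"
    using mu_Z_identity[OF M] .
  have ineq: "(\<Sum>d\<in>{1..M}. real_of_int (mu d) / (real d)^2 * (pi^2/6 - Z (M div d)))
      \<ge> (\<Sum>d\<in>{1..M}. - (2 / real M) * (1 / real d))"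
  proof (rule sum_mono)
    fix d assume d: "d \<in> {1..M}"
    define e where "e = pi^2/6 - Z (M div d)"
    have k1: "M div d \<ge> 1" using d by (simp add: Suc_le_eq div_greater_zero_iff)
    have e0: "0 \<le> e" using Z_le e_def by simp
    have e1: "e \<le> 1 / real (M div d)" using Z_tail[OF k1] e_def by simp
    have "real M \<le> 2 * real d * real (M div d)" using d div_bound by auto
    hence "1 / real (M div d) \<le> 2 * real d / real M" using k1 M
      by (simp add: field_simps)
    hence e2: "e \<le> 2 * real d / real M" using e1 by linarith
    have mu1: "\<bar>real_of_int (mu d)\<bar> \<le> 1" using abs_mu_le[of d] by linarith
    have dpos: "real d > 0" using d by auto
    have "\<bar>real_of_int (mu d) * e\<bar> \<le> e" using mu1 e0
      by (simp add: abs_mult mult_left_le_one_le)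
    hence "real_of_int (mu d) * e \<ge> - (2 * real d / real M)" using e2 by linarith
    hence "real_of_int (mu d) * e / (real d)^2 \<ge> - (2 * real d / real M) / (real d)^2"
      using dpos by (intro divide_right_mono) auto
    moreover have "- (2 * real d / real M) / (real d)^2 = - (2 / real M) * (1 / real d)"
      using dpos by (simp add: field_simps power2_eq_square)
    moreover have "real_of_int (mu d) / (real d)^2 * (pi^2/6 - Z (M div d)) = real_of_int (mu d) * e / (real d)^2"
      by (simp add: e_def)
    ultimately show "- (2 / real M) * (1 / real d) \<le> real_of_int (mu d) / (real d)^2 * (pi^2/6 - Z (M div d))"
      by linarith
  qed
  have eq3: "(\<Sum>d\<in>{1..M}. - (2 / real M) * (1 / real d)) = - (2 / real M) * harm M"
    by (simp only: sum_distrib_left[symmetric] harm_eq)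
  have eq4: "- (2 / real M) * harm M = - (2 * harm M / real M)" by simp
  show ?thesis using eq1 eq2 ineq eq3 eq4 by linarith
qed


lemma N_bounds:
  fixes M b q :: nat
  assumes M: "M \<ge> 1" and b: "b \<le> M" and q: "q \<ge> 1"
  shows "real (card {p. 1 \<le> p \<and> p < q \<and> b*q \<le> M*p}) \<ge> real q - real b * real q / real M - 1"
    and "real (card {p. 1 \<le> p \<and> p < q \<and> b*q \<le> M*p}) \<le> real q - real b * real q / real M"
proof -
  define x where "x = real b * real q / real M"
  define L where "L = nat \<lceil>x\<rceil>"
  have Mpos: "real M > 0" using M by simp
  have x0: "x \<ge> 0" unfolding x_def by simp
  have c0: "\<lceil>x\<rceil> \<ge> 0" using x0 by simp
  have Lc: "real L = real_of_int \<lceil>x\<rceil>" unfolding L_def using c0 by simp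
  have Lge: "real L \<ge> x" unfolding Lc by (rule le_of_int_ceiling)
  have Llt: "real L < x + 1" unfolding Lc using ceiling_correct[of x] by linarith
  have iff: "b*q \<le> M*p \<longleftrightarrow> L \<le> p" for p
  proof -
    have "b*q \<le> M*p \<longleftrightarrow> real b * real q \<le> real M * real p"
      by (metis of_nat_le_iff of_nat_mult)
    also have "\<dots> \<longleftrightarrow> x \<le> real p" unfolding x_def using Mpos
      by (simp add: pos_divide_le_eq mult.commute)
    also have "\<dots> \<longleftrightarrow> \<lceil>x\<rceil> \<le> int p" by (simp add: ceiling_le_iff)
    also have "\<dots> \<longleftrightarrow> L \<le> p" unfolding L_def using c0 by (simp add: nat_le_iff)
    finally show ?thesis .
  qed
  have Lq: "L \<le> q"
  proof -
    have "b*q \<le> M*q" using b by simp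
    thus ?thesis using iff by blast
  qed
  have set_eq: "{p. 1 \<le> p \<and> p < q \<and> b*q \<le> M*p} = {max 1 L..<q}"
    by (simp add: iff set_eq_iff conj_ac)
  have card_eq: "real (card {p. 1 \<le> p \<and> p < q \<and> b*q \<le> M*p}) = real q - real (max 1 L)"
    unfolding set_eq using Lq q by (simp add: of_nat_diff)
  have m1: "real (max 1 L) \<ge> real L" by simp
  have m2: "real (max 1 L) \<le> x + 1"
  proof (cases "L \<le> 1")
    case True thus ?thesis using x0 by (simp add: max_def)
  next
    case False thus ?thesis using Llt by (simp add: max_def)
  qed
  show "real (card {p. 1 \<le> p \<and> p < q \<and> b*q \<le> M*p}) \<ge> real q - real b * real q / real M - 1"
    using card_eq m2 unfolding x_def by linarith
  show "real (card {p. 1 \<le> p \<and> p < q \<and> b*q \<le> M*p}) \<le> real q - real b * real q / real M"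
    using card_eq m1 Lge unfolding x_def by linarith
qed


lemma sum_closed:
  "(\<Sum>q\<in>{1..m}. (x - d * real q) * real q) = x * real m * (real m + 1) / 2 - d * real m * (real m + 1) * (2 * real m + 1) / 6"
  by (induction m) (simp_all add: field_simps power2_eq_square)

lemma S1_bound:
  fixes d m r :: real
  assumes d: "d \<ge> 1" and r: "0 \<le> r" "r + 1 \<le> d" and m: "m \<ge> 1"
  defines "M \<equiv> d * m + r"
  shows "\<bar>(M + 1) * m * (m + 1) / 2 - d * m * (m + 1) * (2 * m + 1) / 6 - M^3 / (6 * d^2)\<bar> \<le> 2 * M^2 / d"
proof -
  have ident: "(M + 1) * m * (m + 1) / 2 - d * m * (m + 1) * (2 * m + 1) / 6 - M^3 / (6 * d^2)
     = - d * m / 6 + m^2 / 2 + (r + 1) * m / 2 - m * r^2 / (2 * d) - r^3 / (6 * d^2)"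
    unfolding M_def using d by (simp add: field_simps power2_eq_square power3_eq_cube)
  have dm: "d * m \<le> M" using r unfolding M_def by simp
  have Md: "M \<ge> d" using d m r unfolding M_def by (smt (verit) mult_le_cancel_left1)
  have Mpos: "M > 0" using Md d by simp
  have mM: "m \<le> M / d" using dm d by (simp add: field_simps mult.commute)
  have M_le: "M \<le> M^2 / d" using Md d Mpos by (simp add: field_simps power2_eq_square)
  have t1: "d * m / 6 \<le> M / 6" "0 \<le> d * m / 6" using dm d m by simp_all
  have t2: "m^2 / 2 \<le> M^2 / (2*d)" "0 \<le> m^2 / 2"
  proof -
    have "m^2 \<le> (M/d)^2" using mM m by (intro power_mono) auto
    also have "\<dots> = M^2/d / d" by (simp add: power2_eq_square)
    also have "\<dots> \<le> M^2 / d"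
    proof -
      have x0: "M^2/d \<ge> 0" using d by simp
      show ?thesis using divide_left_mono[of 1 d "M^2/d"] d x0 by simp
    qed
    finally show "m^2 / 2 \<le> M^2 / (2*d)" by simp
    show "0 \<le> m^2 / 2" by simp
  qed
  have t3: "(r + 1) * m / 2 \<le> M / 2" "0 \<le> (r + 1) * m / 2"
  proof -
    have "(r + 1) * m \<le> d * m" using r m d by (intro mult_right_mono) auto
    hence "(r+1)*m \<le> M" using dm by linarith
    thus "(r + 1) * m / 2 \<le> M / 2" by simp
    show "0 \<le> (r + 1) * m / 2" using r m by simp
  qed
  have t4: "m * r^2 / (2 * d) \<le> M / 2" "0 \<le> m * r^2 / (2 * d)"
  proof -
    have "r^2 \<le> d^2" using r by (intro power_mono) auto
    hence "m * r^2 \<le> m * d^2" using m by (intro mult_left_mono) auto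
    hence "m * r^2 / (2*d) \<le> m * d^2 / (2*d)" using d by (intro divide_right_mono) auto
    also have "m * d^2 / (2*d) = d * m / 2" using d by (simp add: power2_eq_square)
    finally show "m * r^2 / (2 * d) \<le> M / 2" using dm by linarith
    show "0 \<le> m * r^2 / (2 * d)" using m d by simp
  qed
  have t5: "r^3 / (6 * d^2) \<le> M / 6" "0 \<le> r^3 / (6 * d^2)"
  proof -
    have "r^3 \<le> d^3" using r by (intro power_mono) auto
    also have "d^3 = d^2 * d" by (simp add: power2_eq_square power3_eq_cube)
    finally have "r^3 / (6*d^2) \<le> d^2 * d / (6 * d^2)" using d by (intro divide_right_mono) auto
    also have "\<dots> = d / 6" using d by (simp add: power2_eq_square)
    finally show "r^3 / (6 * d^2) \<le> M / 6" using Md by linarith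
    show "0 \<le> r^3 / (6 * d^2)" using r by simp
  qed
  have M2: "M / 6 + M^2 / (2*d) + M / 2 + M / 2 + M / 6 \<le> 2 * M^2 / d"
  proof -
    have e1: "M^2 / (2*d) = (M^2/d)/2" by simp
    have e2: "2 * M^2 / d = 2 * (M^2/d)" by simp
    have "\<And>Q::real. M \<le> Q \<Longrightarrow> M / 6 + Q / 2 + M / 2 + M / 2 + M / 6 \<le> 2 * Q"
      using Mpos by linarith
    from this[OF M_le] show ?thesis unfolding e1 e2 .
  qed
  have gen: "\<And>a b c e f Q::real. a \<le> M/6 \<Longrightarrow> 0 \<le> a \<Longrightarrow> b \<le> Q/2 \<Longrightarrow> 0 \<le> b \<Longrightarrow> c \<le> M/2 \<Longrightarrow> 0 \<le> c
     \<Longrightarrow> e \<le> M/2 \<Longrightarrow> 0 \<le> e \<Longrightarrow> f \<le> M/6 \<Longrightarrow> 0 \<le> f \<Longrightarrow> M \<le> Q \<Longrightarrow> \<bar>- a + b + c - e - f\<bar> \<le> 2 * Q"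
    using Mpos unfolding abs_le_iff by (intro conjI; linarith)
  have e1: "M^2 / (2*d) = (M^2/d)/2" by simp
  have e2: "2 * M^2 / d = 2 * (M^2/d)" by simp
  have "\<bar>- (d * m / 6) + m^2 / 2 + (r + 1) * m / 2 - m * r^2 / (2 * d) - r^3 / (6 * d^2)\<bar> \<le> 2 * M^2 / d"
    unfolding e2 by (rule gen) (use t1 t2 t3 t4 t5 M_le e1 in auto)
  thus ?thesis using ident by simp
qed


lemma coprime_indicator:
  fixes p q M :: nat
  assumes "1 \<le> p" "1 \<le> q" "q \<le> M"
  shows "(\<Sum>d\<in>{d\<in>{1..M}. d dvd p \<and> d dvd q}. mu d) = (if coprime p q then 1 else 0)"
proof -
  have g0: "gcd p q > 0" using assms by simp
  have gq: "gcd p q \<le> q" using assms by (simp add: gcd_le2_nat)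
  have seq: "{d\<in>{1..M}. d dvd p \<and> d dvd q} = {d. d dvd gcd p q}"
  proof (rule set_eqI, rule iffI)
    fix d assume "d \<in> {d. d dvd gcd p q}"
    hence d: "d dvd gcd p q" by simp
    have "d \<le> gcd p q" using d g0 by (rule dvd_imp_le)
    moreover have "d \<ge> 1" using dvd_pos_nat[OF g0 d] by simp
    moreover have "d dvd p" "d dvd q" using d by simp_all
    ultimately show "d \<in> {d\<in>{1..M}. d dvd p \<and> d dvd q}" using gq assms(3) by simp
  next
    fix d assume "d \<in> {d\<in>{1..M}. d dvd p \<and> d dvd q}"
    thus "d \<in> {d. d dvd gcd p q}" by simp
  qed
  have "(\<Sum>d\<in>{d. d dvd gcd p q}. mu d) = (if gcd p q = 1 then 1 else 0)"
    by (rule mu_divisor_sum[OF g0])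
  thus ?thesis unfolding seq by (simp add: coprime_iff_gcd_eq_1)
qed

definition RR :: "nat \<Rightarrow> nat \<Rightarrow> (nat \<times> nat) set" where
  "RR M b = {(p,q). 1 \<le> p \<and> p < q \<and> q \<le> M \<and> b*q \<le> M*p}"

lemma RR_finite: "finite (RR M b)"
proof -
  have "RR M b \<subseteq> {0..M} \<times> {0..M}" unfolding RR_def by (auto simp: subset_iff)
  moreover have "finite ({0..M} \<times> {0..M})" by simp
  ultimately show ?thesis by (rule finite_subset)
qed

definition Nc :: "nat \<Rightarrow> nat \<Rightarrow> nat \<Rightarrow> nat" where
  "Nc M b q = card {p. 1 \<le> p \<and> p < q \<and> b*q \<le> M*p}"

lemma W_eq:
  assumes d: "1 \<le> d" "d \<le> M"
  shows "(\<Sum>x\<in>{x\<in>RR M b. d dvd fst x \<and> d dvd snd x}. real M + 1 - real (snd x))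
       = (\<Sum>q\<in>{1..M div d}. (real M + 1 - real d * real q) * real (Nc M b q))"
proof -
  define NS where "NS q = {p. 1 \<le> p \<and> p < q \<and> b*q \<le> M*p}" for q
  have finNS: "finite (NS q)" for q
    by (rule finite_subset[of _ "{..<q}"]) (auto simp: NS_def)
  have "(\<Sum>q\<in>{1..M div d}. (real M + 1 - real d * real q) * real (Nc M b q))
      = (\<Sum>q\<in>{1..M div d}. \<Sum>p\<in>NS q. (real M + 1 - real d * real q))"
    by (simp add: Nc_def NS_def mult.commute)
  also have "\<dots> = (\<Sum>(q,p)\<in>Sigma {1..M div d} NS. (real M + 1 - real d * real q))"
    by (rule sum.Sigma) (auto simp: finNS)
  also have "\<dots> = (\<Sum>x\<in>{x\<in>RR M b. d dvd fst x \<and> d dvd snd x}. real M + 1 - real (snd x))"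
  proof -
    have dpos: "d > 0" using d by simp
    have A: "(d*p, d*q) \<in> {x\<in>RR M b. d dvd fst x \<and> d dvd snd x}"
      if y: "(q,p) \<in> Sigma {1..M div d} NS" for q p
    proof -
      have qp: "1 \<le> q" "q \<le> M div d" "1 \<le> p" "p < q" "b*q \<le> M*p"
        using y by (auto simp: NS_def)
      have dq: "d*q \<le> M" using qp(2) dpos less_eq_div_iff_mult_less_eq[of d q M] by (simp add: mult.commute)
      have "b*(d*q) \<le> M*(d*p)" using mult_le_mono2[OF qp(5), of d] by (simp add: algebra_simps)
      moreover have "d*p < d*q" using qp dpos by simp
      moreover have "1 \<le> d*p" using qp d by simp
      ultimately show ?thesis using dq by (simp add: RR_def)
    qed
    have B: "(q div d, p div d) \<in> Sigma {1..M div d} NS \<and> d * (p div d) = p \<and> d * (q div d) = q"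
      if x: "(p,q) \<in> {x\<in>RR M b. d dvd fst x \<and> d dvd snd x}" for p q
    proof -
      have pq: "1 \<le> p" "p < q" "q \<le> M" "b*q \<le> M*p" "d dvd p" "d dvd q"
        using x by (auto simp: RR_def)
      obtain p' where p': "p = d*p'" using pq by blast
      obtain q' where q': "q = d*q'" using pq by blast
      have "1 \<le> p'" using pq p' by (cases p') auto
      moreover have "p' < q'" using pq p' q' by simp
      moreover have "q' \<le> M div d" using pq q' dpos less_eq_div_iff_mult_less_eq[of d q' M] by (simp add: mult.commute)
      moreover have "1 \<le> q'" using \<open>1 \<le> p'\<close> \<open>p' < q'\<close> by simp
      moreover have "b*q' \<le> M*p'"
      proof -
        have "d*(b*q') \<le> d*(M*p')" using pq(4) p' q' by (simp add: algebra_simps)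
        thus ?thesis using dpos by simp
      qed
      ultimately show ?thesis using p' q' dpos by (simp add: NS_def)
    qed
    show ?thesis
      apply (rule sum.reindex_bij_witness[of _ "\<lambda>(p,q). (q div d, p div d)" "\<lambda>(q,p). (d*p, d*q)"])
      subgoal for y using dpos by (cases y) simp
      subgoal for y using A by (cases y) simp
      subgoal for y proof (cases y)
        case (Pair p q) assume "y \<in> {x \<in> RR M b. d dvd fst x \<and> d dvd snd x}"
        thus ?thesis using B[of p q] Pair by simp
      qed
      subgoal for y proof (cases y)
        case (Pair p q) assume "y \<in> {x \<in> RR M b. d dvd fst x \<and> d dvd snd x}"
        thus ?thesis using B[of p q] Pair by simp
      qed
      subgoal for y by (cases y) simp
      done
  qed
  finally show ?thesis by simp
qed


lemma W_bound:
  fixes M b d :: nat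
  assumes d: "1 \<le> d" "d \<le> M" and b: "b \<le> M"
  shows "\<bar>(\<Sum>q\<in>{1..M div d}. (real M + 1 - real d * real q) * real (Nc M b q))
           - (real M - real b) * (real M)^2 / (6 * (real d)^2)\<bar> \<le> 4 * (real M)^2 / real d"
proof -
  define m where "m = M div d"
  define r where "r = M mod d"
  have M1: "M \<ge> 1" using d by simp
  have Mr: "real M > 0" using M1 by simp
  have dr: "real d \<ge> 1" using d by simp
  have Mdec: "real M = real d * real m + real r"
    unfolding m_def r_def by (metis of_nat_add of_nat_mult div_mult_mod_eq mult.commute)
  have rd: "real r + 1 \<le> real d" unfolding r_def using d
    by (metis Suc_leI le0 less_le_trans mod_less_divisor of_nat_1 of_nat_add of_nat_le_iff plus_1_eq_Suc add.commute zero_less_one)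
  have m1: "real m \<ge> 1" unfolding m_def using d by (simp add: Suc_le_eq div_greater_zero_iff)
  define B where "B = (real M - real b) / real M"
  have B0: "0 \<le> B" "B \<le> 1" unfolding B_def using b Mr by (auto simp: field_simps)
  define S1 where "S1 = (\<Sum>q\<in>{1..m}. (real M + 1 - real d * real q) * real q)"
  define S0 where "S0 = (\<Sum>q\<in>{1..m}. (real M + 1 - real d * real q))"
  define W where "W = (\<Sum>q\<in>{1..m}. (real M + 1 - real d * real q) * real (Nc M b q))"
  have coef: "0 \<le> real M + 1 - real d * real q" if "q \<in> {1..m}" for q
  proof -
    have "d * q \<le> M" using that d less_eq_div_iff_mult_less_eq[of d q M] unfolding m_def
      by (simp add: mult.commute)
    hence "real d * real q \<le> real M" by (metis of_nat_le_iff of_nat_mult)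
    thus ?thesis by simp
  qed
  have Nb: "B * real q - 1 \<le> real (Nc M b q)" "real (Nc M b q) \<le> B * real q" if "q \<in> {1..m}" for q
  proof -
    have q1: "q \<ge> 1" using that by simp
    have e: "real q - real b * real q / real M = B * real q" unfolding B_def using Mr by (simp add: field_simps)
    show "B * real q - 1 \<le> real (Nc M b q)" using N_bounds(1)[OF M1 b q1] e unfolding Nc_def by linarith
    show "real (Nc M b q) \<le> B * real q" using N_bounds(2)[OF M1 b q1] e unfolding Nc_def by linarith
  qed
  have Wup: "W \<le> B * S1"
  proof -
    have "W \<le> (\<Sum>q\<in>{1..m}. (real M + 1 - real d * real q) * (B * real q))"
      unfolding W_def by (rule sum_mono) (use coef Nb in \<open>auto intro: mult_left_mono\<close>)
    also have "\<dots> = B * S1" unfolding S1_def by (simp add: sum_distrib_left algebra_simps)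
    finally show ?thesis .
  qed
  have Wlo: "W \<ge> B * S1 - S0"
  proof -
    have "W \<ge> (\<Sum>q\<in>{1..m}. (real M + 1 - real d * real q) * (B * real q - 1))"
      unfolding W_def by (rule sum_mono) (use coef Nb in \<open>auto intro: mult_left_mono\<close>)
    moreover have "(\<Sum>q\<in>{1..m}. (real M + 1 - real d * real q) * (B * real q - 1))
        = (\<Sum>q\<in>{1..m}. B * ((real M + 1 - real d * real q) * real q) - (real M + 1 - real d * real q))"
      by (rule sum.cong) (simp_all add: algebra_simps)
    moreover have "\<dots> = B * S1 - S0"
      unfolding S1_def S0_def by (simp only: sum_subtractf sum_distrib_left)
    ultimately show ?thesis by simp
  qed
  have S0b: "S0 \<le> 2 * (real M)^2 / real d"
  proof -
    have "S0 \<le> (\<Sum>q\<in>{1..m}. real M + 1)"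
      unfolding S0_def by (rule sum_mono) simp
    also have "\<dots> = real m * (real M + 1)" by simp
    also have "\<dots> \<le> (real M / real d) * (2 * real M)"
    proof (rule mult_mono)
      show "real m \<le> real M / real d" using Mdec dr rd by (simp add: field_simps)
      show "real M + 1 \<le> 2 * real M" using M1 by simp
    qed (use Mr dr in auto)
    also have "\<dots> = 2 * (real M)^2 / real d" by (simp add: power2_eq_square)
    finally show ?thesis .
  qed
  have S1eq: "S1 = (real M + 1) * real m * (real m + 1) / 2 - real d * real m * (real m + 1) * (2 * real m + 1) / 6"
    unfolding S1_def using sum_closed[of "real M + 1" "real d" m] by simp
  have S1b: "\<bar>S1 - (real M)^3 / (6 * (real d)^2)\<bar> \<le> 2 * (real M)^2 / real d"
    using S1_bound[OF dr _ rd m1] Mdec S1eq by simp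
  have main: "(real M - real b) * (real M)^2 / (6 * (real d)^2) = B * ((real M)^3 / (6 * (real d)^2))"
  proof -
    have BM: "B * real M = real M - real b" unfolding B_def using Mr by simp
    have "B * (real M)^3 = (B * real M) * (real M)^2" by (simp add: power2_eq_square power3_eq_cube)
    hence "B * (real M)^3 = (real M - real b) * (real M)^2" using BM by simp
    thus ?thesis by (metis times_divide_eq_right)
  qed
  have Bd: "\<bar>B * S1 - B * ((real M)^3 / (6 * (real d)^2))\<bar> \<le> 2 * (real M)^2 / real d"
  proof -
    have "\<bar>B * S1 - B * ((real M)^3 / (6 * (real d)^2))\<bar> = B * \<bar>S1 - (real M)^3 / (6 * (real d)^2)\<bar>"
    proof -
      have "\<And>X. \<bar>B * S1 - B * X\<bar> = B * \<bar>S1 - X\<bar>" using B0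
        by (metis abs_mult abs_of_nonneg right_diff_distrib)
      thus ?thesis by blast
    qed
    also have "\<dots> \<le> 1 * (2 * (real M)^2 / real d)" using B0 S1b by (intro mult_mono) auto
    finally show ?thesis by simp
  qed
  have S00: "S0 \<ge> 0" unfolding S0_def by (rule sum_nonneg) (use coef in auto)
  show ?thesis unfolding m_def[symmetric] W_def[symmetric] main
    using Wup Wlo Bd S0b S00 unfolding abs_le_iff by (intro conjI; linarith)
qed


lemma T_bound:
  fixes M b :: nat
  assumes M1: "M \<ge> 1" and b: "b \<le> M"
  shows "(\<Sum>x\<in>RR M b. if coprime (fst x) (snd x) then real M + 1 - real (snd x) else 0)
          \<ge> (real M - real b) * (real M)^2 / pi^2 - 5 * (real M)^2 * harm M"
proof -
  define w where "w x = real M + 1 - real (snd x)" for x :: "nat \<times> nat"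
  define D where "D x = {d\<in>{1..M}. d dvd fst x \<and> d dvd snd x}" for x :: "nat \<times> nat"
  define Wd where "Wd d = (\<Sum>q\<in>{1..M div d}. (real M + 1 - real d * real q) * real (Nc M b q))" for d
  define main where "main d = (real M - real b) * (real M)^2 / (6 * (real d)^2)" for d :: nat
  define G where "G = (\<Sum>d\<in>{1..M}. real_of_int (mu d) / (real d)^2)"
  have Mr: "real M \<ge> 1" using M1 by simp
  have s1: "(\<Sum>x\<in>RR M b. if coprime (fst x) (snd x) then w x else 0)
      = (\<Sum>x\<in>RR M b. \<Sum>d\<in>D x. w x * real_of_int (mu d))"
  proof (rule sum.cong[OF refl])
    fix x assume x: "x \<in> RR M b"
    obtain p q where pq: "x = (p,q)" "1 \<le> p" "p < q" "q \<le> M" using x by (auto simp: RR_def)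
    have ci: "(\<Sum>d\<in>{d\<in>{1..M}. d dvd p \<and> d dvd q}. mu d) = (if coprime p q then 1 else 0)"
      using pq(2-4) by (intro coprime_indicator) auto
    have Dx: "D x = {d\<in>{1..M}. d dvd p \<and> d dvd q}" unfolding D_def pq(1) by simp
    have "(\<Sum>d\<in>D x. w x * real_of_int (mu d)) = w x * real_of_int (\<Sum>d\<in>D x. mu d)"
      by (simp add: sum_distrib_left)
    also have "\<dots> = (if coprime p q then w x else 0)" unfolding Dx ci by simp
    finally show "(if coprime (fst x) (snd x) then w x else 0) = (\<Sum>d\<in>D x. w x * real_of_int (mu d))"
      using pq(1) by simp
  qed
  also have "\<dots> = (\<Sum>d\<in>{1..M}. \<Sum>x\<in>{x\<in>RR M b. d dvd fst x \<and> d dvd snd x}. w x * real_of_int (mu d))"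
    unfolding D_def by (rule sum.swap_restrict) (simp_all add: RR_finite)
  also have "\<dots> = (\<Sum>d\<in>{1..M}. real_of_int (mu d) * Wd d)"
  proof (rule sum.cong[OF refl])
    fix d assume d: "d \<in> {1..M}"
    have "(\<Sum>x\<in>{x\<in>RR M b. d dvd fst x \<and> d dvd snd x}. w x * real_of_int (mu d))
        = real_of_int (mu d) * (\<Sum>x\<in>{x\<in>RR M b. d dvd fst x \<and> d dvd snd x}. w x)"
      by (simp add: sum_distrib_left mult.commute)
    also have "(\<Sum>x\<in>{x\<in>RR M b. d dvd fst x \<and> d dvd snd x}. w x) = Wd d"
      unfolding w_def Wd_def using W_eq[of d M b] d by simp
    finally show "(\<Sum>x\<in>{x\<in>RR M b. d dvd fst x \<and> d dvd snd x}. w x * real_of_int (mu d)) = real_of_int (mu d) * Wd d" .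
  qed
  also have "\<dots> \<ge> (\<Sum>d\<in>{1..M}. real_of_int (mu d) * main d - 4 * (real M)^2 * (1 / real d))"
  proof (rule sum_mono)
    fix d assume d: "d \<in> {1..M}"
    have wb: "\<bar>Wd d - main d\<bar> \<le> 4 * (real M)^2 / real d"
      unfolding Wd_def main_def using W_bound[of d M b] d b by simp
    have mu1: "\<bar>real_of_int (mu d)\<bar> \<le> 1" using abs_mu_le[of d] by linarith
    have "\<bar>real_of_int (mu d) * (Wd d - main d)\<bar> \<le> 1 * (4 * (real M)^2 / real d)"
      unfolding abs_mult using mu1 wb by (intro mult_mono) auto
    moreover have "real_of_int (mu d) * Wd d = real_of_int (mu d) * main d + real_of_int (mu d) * (Wd d - main d)"
      by (simp add: algebra_simps)
    moreover have "4 * (real M)^2 * (1 / real d) = 4 * (real M)^2 / real d" by simp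
    ultimately show "real_of_int (mu d) * main d - 4 * (real M)^2 * (1 / real d) \<le> real_of_int (mu d) * Wd d"
      by (smt (verit))
  qed
  also have "(\<Sum>d\<in>{1..M}. real_of_int (mu d) * main d - 4 * (real M)^2 * (1 / real d))
      = (real M - real b) * (real M)^2 / 6 * G - 4 * (real M)^2 * harm M"
  proof -
    have "(\<Sum>d\<in>{1..M}. real_of_int (mu d) * main d) = (\<Sum>d\<in>{1..M}. (real M - real b) * (real M)^2 / 6 * (real_of_int (mu d) / (real d)^2))"
      by (rule sum.cong) (simp_all add: main_def)
    also have "\<dots> = (real M - real b) * (real M)^2 / 6 * G" unfolding G_def by (simp only: sum_distrib_left)
    finally have e1: "(\<Sum>d\<in>{1..M}. real_of_int (mu d) * main d) = (real M - real b) * (real M)^2 / 6 * G" .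
    have e2: "(\<Sum>d\<in>{1..M}. 4 * (real M)^2 * (1 / real d)) = 4 * (real M)^2 * harm M"
      by (simp only: sum_distrib_left[symmetric] harm_eq)
    show ?thesis by (simp only: sum_subtractf e1 e2)
  qed
  finally have T1: "(\<Sum>x\<in>RR M b. if coprime (fst x) (snd x) then w x else 0)
      \<ge> (real M - real b) * (real M)^2 / 6 * G - 4 * (real M)^2 * harm M" .
  have Gb: "pi^2/6 * G \<ge> 1 - 2 * harm M / real M" unfolding G_def by (rule G_lower[OF M1])
  have pi2: "pi^2 > 2"
  proof -
    have "pi^2 > 3^2" using pi_gt3 by (intro power_strict_mono) auto
    thus ?thesis by simp
  qed
  define A where "A = (real M - real b) * (real M)^2"
  have A0: "A \<ge> 0" unfolding A_def using b by simp
  have H0: "harm M \<ge> (0::real)" by (rule harm_nonneg)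
  have "A / 6 * G = A / pi^2 * (pi^2/6 * G)" using pi2 by (simp add: field_simps)
  also have "\<dots> \<ge> A / pi^2 * (1 - 2 * harm M / real M)"
    using Gb A0 pi2 by (intro mult_left_mono) auto
  finally have T2: "A / 6 * G \<ge> A / pi^2 - A / pi^2 * (2 * harm M / real M)"
    by (simp add: algebra_simps)
  have T3: "A / pi^2 * (2 * harm M / real M) \<le> (real M)^2 * harm M"
  proof -
    have "A / pi^2 * (2 * harm M / real M) = (real M - real b) * real M * harm M * (2 / pi^2)"
      unfolding A_def using Mr by (simp add: field_simps power2_eq_square)
    also have "\<dots> \<le> (real M - real b) * real M * harm M * 1"
      using pi2 b H0 Mr by (intro mult_left_mono) auto
    also have "\<dots> \<le> (real M)^2 * harm M"
      using b H0 Mr by (simp add: power2_eq_square mult_right_mono)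
    finally show ?thesis .
  qed
  have "(\<Sum>x\<in>RR M b. if coprime (fst x) (snd x) then w x else 0) \<ge> A / pi^2 - 5 * (real M)^2 * harm M"
    using T1 T2 T3 unfolding A_def by linarith
  thus ?thesis unfolding w_def A_def by simp
qed


definition fl :: "real \<Rightarrow> real \<Rightarrow> int \<Rightarrow> int" where
  "fl a bb n = \<lfloor>real_of_int n * a + bb\<rfloor>"

definition wd :: "real \<Rightarrow> real \<Rightarrow> nat \<Rightarrow> int list" where
  "wd a bb M = map (\<lambda>i. fl a bb (int i + 1) - fl a bb (int i)) [0..<M]"

lemma wd_factor:
  assumes "0 < a" "a < 1" "a \<notin> \<rat>" "0 \<le> bb" "bb < 1"
  shows "sturmian_factor (wd a bb M)"
proof -
  define u where "u n = \<lfloor>(of_int n + 1) * a + bb\<rfloor> - \<lfloor>of_int n * a + bb\<rfloor>" for n :: int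
  have su: "sturmian_word u" unfolding sturmian_word_def u_def using assms by blast
  have "wd a bb M = map (\<lambda>i. u (0 + int i)) [0..<length (wd a bb M)]"
    unfolding wd_def u_def fl_def by simp
  thus ?thesis unfolding sturmian_factor_def using su by blast
qed

lemma floor_diff_01:
  fixes x a :: real assumes "0 < a" "a < 1"
  shows "\<lfloor>x + a\<rfloor> - \<lfloor>x\<rfloor> \<in> {0, 1}"
proof -
  have "\<lfloor>x\<rfloor> \<le> \<lfloor>x + a\<rfloor>" using assms by (intro floor_mono) simp
  moreover have "\<lfloor>x + a\<rfloor> \<le> \<lfloor>x\<rfloor> + 1"
    using assms floor_correct[of x] floor_correct[of "x + a"] by linarith
  ultimately show ?thesis by auto
qed

lemma ceiling_diff_01:
  fixes x a :: real assumes "0 < a" "a < 1"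
  shows "\<lceil>x + a\<rceil> - \<lceil>x\<rceil> \<in> {0, 1}"
proof -
  have "\<lceil>x\<rceil> \<le> \<lceil>x + a\<rceil>" using assms by (intro ceiling_mono) simp
  moreover have "\<lceil>x + a\<rceil> \<le> \<lceil>x\<rceil> + 1"
    using assms ceiling_correct[of x] ceiling_correct[of "x + a"] by linarith
  ultimately show ?thesis by auto
qed

lemma sturmian_letters: "sturmian_word u \<Longrightarrow> u n \<in> {0, 1}"
proof -
  assume "sturmian_word u"
  then obtain a bb :: real where ab: "0 < a" "a < 1" and
    cases: "(\<forall>n. u n = \<lfloor>(of_int n + 1) * a + bb\<rfloor> - \<lfloor>of_int n * a + bb\<rfloor>) \<or>
         (\<forall>n. u n = \<lceil>(of_int n + 1) * a + bb\<rceil> - \<lceil>of_int n * a + bb\<rceil>)"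
    unfolding sturmian_word_def by blast
  have e: "(of_int n + 1) * a + bb = (of_int n * a + bb) + a" by (simp add: algebra_simps)
  have e2: "\<lceil>(of_int n + 1) * a + bb\<rceil> = \<lceil>(of_int n * a + bb) + a\<rceil>" using e by (rule arg_cong)
  have e1: "\<lfloor>(of_int n + 1) * a + bb\<rfloor> = \<lfloor>(of_int n * a + bb) + a\<rfloor>" using e by (rule arg_cong)
  from cases show ?thesis
  proof
    assume "\<forall>n. u n = \<lfloor>(of_int n + 1) * a + bb\<rfloor> - \<lfloor>of_int n * a + bb\<rfloor>"
    hence "u n = \<lfloor>(of_int n * a + bb) + a\<rfloor> - \<lfloor>of_int n * a + bb\<rfloor>" using e1 by metis
    thus ?thesis using floor_diff_01[OF ab, of "of_int n * a + bb"] by metis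
  next
    assume "\<forall>n. u n = \<lceil>(of_int n + 1) * a + bb\<rceil> - \<lceil>of_int n * a + bb\<rceil>"
    hence "u n = \<lceil>(of_int n * a + bb) + a\<rceil> - \<lceil>of_int n * a + bb\<rceil>" using e2 by metis
    thus ?thesis using ceiling_diff_01[OF ab, of "of_int n * a + bb"] by metis
  qed
qed

lemma factor_letters: "sturmian_factor w \<Longrightarrow> set w \<subseteq> {0, 1}"
proof -
  assume "sturmian_factor w"
  then obtain u k where su: "sturmian_word u" and w: "w = map (\<lambda>i. u (k + int i)) [0..<length w]"
    unfolding sturmian_factor_def by blast
  have "set (map (\<lambda>i. u (k + int i)) [0..<length w]) \<subseteq> {0, 1}"
    using sturmian_letters[OF su] by auto
  thus ?thesis using w by metis
qed

lemma H_set_finite: "finite {w. sturmian_factor w \<and> length w = M \<and> b \<le> length (filter (\<lambda>x. x = 1) w)}"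
proof (rule finite_subset)
  show "{w. sturmian_factor w \<and> length w = M \<and> b \<le> length (filter (\<lambda>x. x = 1) w)} \<subseteq> {xs. set xs \<subseteq> {0,1} \<and> length xs = M}"
    using factor_letters by auto
  show "finite {xs. set xs \<subseteq> {0::int,1} \<and> length xs = M}"
    by (rule finite_lists_length_eq) simp
qed

lemma count_ones: "set w \<subseteq> {0, 1} \<Longrightarrow> int (length (filter (\<lambda>x. x = 1) w)) = sum_list w"
  by (induction w) auto

lemma wd_length [simp]: "length (wd a bb M) = M" by (simp add: wd_def)

lemma wd_nth: "i < M \<Longrightarrow> wd a bb M ! i = fl a bb (int i + 1) - fl a bb (int i)"
  by (simp add: wd_def)

lemma wd_sum: "sum_list (wd a bb M) = fl a bb (int M) - fl a bb 0"
  by (induction M) (simp_all add: wd_def add.commute)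

lemma wd_eq_diff:
  assumes "wd a bb M = wd a' bb' M" "i \<le> M"
  shows "fl a bb (int i) - fl a bb 0 = fl a' bb' (int i) - fl a' bb' 0"
  using assms(2)
proof (induction i)
  case 0 thus ?case by simp
next
  case (Suc i)
  have "wd a bb M ! i = wd a' bb' M ! i" using assms(1) by simp
  hence "fl a bb (int i + 1) - fl a bb (int i) = fl a' bb' (int i + 1) - fl a' bb' (int i)"
    using Suc.prems by (simp add: wd_nth)
  moreover have "fl a bb (int (Suc i)) = fl a bb (int i + 1)" "fl a' bb' (int (Suc i)) = fl a' bb' (int i + 1)"
    by (simp_all add: add.commute)
  moreover have "fl a bb (int i) - fl a bb 0 = fl a' bb' (int i) - fl a' bb' 0" using Suc by simp
  ultimately show ?case by linarith
qed

lemma wd_eq_diff2: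
  assumes "wd a bb M = wd a' bb' M" "i \<le> M" "j \<le> M"
  shows "fl a bb (int j) - fl a bb (int i) = fl a' bb' (int j) - fl a' bb' (int i)"
  using wd_eq_diff[OF assms(1,2)] wd_eq_diff[OF assms(1,3)] by linarith


definition al :: "real \<Rightarrow> nat \<Rightarrow> nat \<Rightarrow> real" where
  "al e p q = real p / real q + e"

definition be :: "real \<Rightarrow> nat \<Rightarrow> nat \<Rightarrow> nat \<Rightarrow> real" where
  "be e p q t = real_of_int \<lceil>real t * al e p q + real q * e / 2\<rceil> - (real t * al e p q + real q * e / 2)"

lemma q_al: "q \<ge> 1 \<Longrightarrow> real q * al e p q = real p + real q * e"
  unfolding al_def by (simp add: field_simps)

lemma D_a:
  assumes q: "q \<ge> 1" and e: "0 < e" "real q * e < 2"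
  shows "fl (al e p q) (be e p q t) (int t + int q) - fl (al e p q) (be e p q t) (int t) = int p + 1"
proof -
  define a where "a = al e p q"
  define c where "c = real q * e / 2"
  define y where "y = real t * a + c"
  define Y where "Y = \<lceil>y\<rceil>"
  have c0: "0 < c" "c < 1" unfolding c_def using e q by auto
  have bdef: "be e p q t = real_of_int Y - y" unfolding be_def Y_def y_def a_def c_def by simp
  have qa: "real q * a = real p + 2 * c" unfolding a_def c_def using q_al[OF q] by simp
  have x1: "real_of_int (int t) * a + be e p q t = real_of_int Y - c"
    unfolding bdef y_def by simp
  have x2: "real_of_int (int t + int q) * a + be e p q t = real_of_int (Y + int p) + c"
    unfolding bdef y_def using qa by (simp add: algebra_simps)
  have f1: "\<lfloor>real_of_int Y - c\<rfloor> = Y - 1" using c0 by (simp add: floor_eq_iff)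
  have f2: "\<lfloor>real_of_int (Y + int p) + c\<rfloor> = Y + int p" using c0 by (simp add: floor_eq_iff)
  show ?thesis unfolding fl_def a_def[symmetric] x1 x2 f1 f2 by simp
qed

lemma D_b:
  assumes "fl a bb (i + int q) - fl a bb i = int p + 1"
  shows "real p < real q * a"
proof -
  have "real_of_int (fl a bb (i + int q)) \<le> real_of_int (i + int q) * a + bb" unfolding fl_def by simp
  moreover have "real_of_int (fl a bb i) > real_of_int i * a + bb - 1" unfolding fl_def by linarith
  moreover have "real_of_int (fl a bb (i + int q)) - real_of_int (fl a bb i) = real p + 1"
    using assms by (metis of_int_1 of_int_add of_int_diff of_int_of_nat_eq)
  ultimately show ?thesis by (simp add: algebra_simps)
qed

lemma D_c:
  assumes cop: "coprime p q" and q: "q \<ge> 1" "q \<le> M" and tM: "t + q \<le> M" and iM: "i + q \<le> M"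
    and e: "0 < e" "e * (real M)^2 < 1/2"
    and h: "fl (al e p q) (be e p q t) (int i + int q) - fl (al e p q) (be e p q t) (int i) = int p + 1"
  shows "i = t"
proof -
  define a where "a = al e p q"
  define c where "c = real q * e / 2"
  define y where "y = real t * a + c"
  define Y where "Y = \<lceil>y\<rceil>"
  define X where "X = real i * a + be e p q t"
  define j where "j = int i - int t"
  have Mr: "real M \<ge> 1" using q by simp
  have qM: "real q \<le> real M" using q by simp
  have qe: "real q * e \<le> real M * e" using qM e by simp
  have Me: "real M * e \<le> (real M)^2 * e" using Mr e by (simp add: power2_eq_square)
  have qe2: "real q * e < 2" using qe Me e(2) by (simp add: mult.commute)
  have c0: "0 < c" "c < 1" unfolding c_def using e q qe2 by auto
  have bdef: "be e p q t = real_of_int Y - y" unfolding be_def Y_def y_def a_def c_def by simp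
  have qa: "real q * a = real p + 2 * c" unfolding a_def c_def using q_al[OF q(1)] by simp
  have Xq: "real_of_int (int i + int q) * a + be e p q t = (X + 2 * c) + real p"
    unfolding X_def using qa by (simp add: algebra_simps)
  have fX: "fl a (be e p q t) (int i) = \<lfloor>X\<rfloor>" unfolding fl_def X_def by simp
  have fXq: "fl a (be e p q t) (int i + int q) = \<lfloor>X + 2 * c\<rfloor> + int p"
    unfolding fl_def Xq by (metis floor_add_int of_int_of_nat_eq)
  have n0: "\<lfloor>X + 2 * c\<rfloor> = \<lfloor>X\<rfloor> + 1" using h fX fXq unfolding a_def by simp
  define n where "n = \<lfloor>X\<rfloor> + 1 - Y"
  have n_up: "real_of_int (\<lfloor>X\<rfloor> + 1) \<le> X + 2 * c" using n0 by (metis of_int_floor_le)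
  have n_lo: "X < real_of_int (\<lfloor>X\<rfloor> + 1)" by linarith
  have Xj: "X = real_of_int j * a + real_of_int Y - c"
    unfolding X_def bdef y_def j_def by (simp add: algebra_simps)
  have nr: "real_of_int n = real_of_int (\<lfloor>X\<rfloor> + 1) - real_of_int Y" unfolding n_def by simp
  have A1: "real_of_int n \<le> real_of_int j * a + c" using n_up Xj nr by linarith
  have A2: "real_of_int j * a - c < real_of_int n" using n_lo Xj nr by linarith
  have ja: "real q * (real_of_int j * a) = real_of_int j * real p + real_of_int j * (real q * e)"
  proof -
    have "real q * (real_of_int j * a) = real_of_int j * (real q * a)" by simp
    also have "\<dots> = real_of_int j * (real p + 2 * c)" using qa by simp
    also have "\<dots> = real_of_int j * real p + real_of_int j * (real q * e)" unfolding c_def by (simp add: algebra_simps)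
    finally show ?thesis .
  qed
  define z where "z = int q * n - j * int p"
  have qpos: "real q > 0" using q by simp
  have B1: "real_of_int z \<le> real_of_int j * (real q * e) + real q * c"
  proof -
    have "real q * real_of_int n \<le> real q * (real_of_int j * a + c)" using A1 qpos by simp
    thus ?thesis unfolding z_def using ja by (simp add: algebra_simps)
  qed
  have B2: "real_of_int z > real_of_int j * (real q * e) - real q * c"
  proof -
    have "real q * (real_of_int j * a - c) < real q * real_of_int n" using A2 qpos by simp
    thus ?thesis unfolding z_def using ja by (simp add: algebra_simps)
  qed
  have jM: "\<bar>real_of_int j\<bar> \<le> real M" unfolding j_def using tM iM by auto
  have J: "\<bar>real_of_int j * (real q * e)\<bar> \<le> (real M)^2 * e"
  proof -
    have "\<bar>real_of_int j * (real q * e)\<bar> = \<bar>real_of_int j\<bar> * (real q * e)" using e by (simp add: abs_mult)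
    also have "\<dots> \<le> real M * (real M * e)" using jM qe e by (intro mult_mono) auto
    finally show ?thesis by (simp add: power2_eq_square)
  qed
  have Qc: "real q * c \<le> (real M)^2 * e / 2"
  proof -
    have "real q * c = (real q * real q) * e / 2" unfolding c_def by simp
    also have "real q * real q \<le> real M * real M" using qM by (intro mult_mono) auto
    hence "(real q * real q) * e / 2 \<le> (real M * real M) * e / 2" using e by (intro divide_right_mono mult_right_mono) auto
    finally show ?thesis by (simp add: power2_eq_square)
  qed
  have E2: "(real M)^2 * e < 1/2" using e(2) by (simp add: mult.commute)
  have J2: "real_of_int j * (real q * e) \<le> (real M)^2 * e" "- ((real M)^2 * e) \<le> real_of_int j * (real q * e)"
    using J unfolding abs_le_iff by linarith+
  have "real_of_int z < 1" "real_of_int z > -1" using B1 B2 J2 Qc E2 by linarith+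
  hence z0: "z = 0" by linarith
  hence "int q * n = j * int p" unfolding z_def by simp
  hence "int q dvd j * int p" by (metis dvd_triv_left)
  moreover have "coprime (int q) (int p)" using cop by (simp add: coprime_commute)
  ultimately have "int q dvd j" using coprime_dvd_mult_left_iff by blast
  then obtain m where jm: "j = int q * m" by blast
  have nm: "n = m * int p" using \<open>int q * n = j * int p\<close> jm q by simp
  have C1: "0 \<le> (real_of_int m + 1/2) * (real q * e)"
  proof -
    have "real_of_int n \<le> real_of_int j * a + c" by (rule A1)
    hence "real_of_int m * real p \<le> real_of_int m * (real q * a) + c" unfolding nm jm by (simp add: algebra_simps)
    thus ?thesis unfolding qa c_def by (simp add: algebra_simps)
  qed
  have C2: "(real_of_int m - 1/2) * (real q * e) < 0"
  proof -
    have "real_of_int j * a - c < real_of_int n" by (rule A2)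
    hence "real_of_int m * (real q * a) - c < real_of_int m * real p" unfolding nm jm by (simp add: algebra_simps)
    thus ?thesis unfolding qa c_def by (simp add: algebra_simps)
  qed
  have qe0: "real q * e > 0" using qpos e by simp
  have "real_of_int m + 1/2 \<ge> 0" using C1 qe0 by (simp add: zero_le_mult_iff)
  moreover have "real_of_int m - 1/2 < 0" using C2 qe0 e(1) by (simp add: mult_less_0_iff)
  ultimately have "m = 0" by linarith
  hence "j = 0" using jm by simp
  thus ?thesis unfolding j_def by simp
qed


lemma exists_irrational: assumes "(r::real) > 0" shows "\<exists>e. 0 < e \<and> e < r \<and> e \<notin> \<rat>"
proof (rule ccontr)
  assume "\<not> ?thesis"
  hence "{0<..<r} \<subseteq> \<rat>" by auto
  hence "countable {0<..<r}" using countable_rat countable_subset by blast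
  thus False using uncountable_open_interval[of 0 r] assms by simp
qed

lemma coprime_cross_eq:
  fixes p q p' q' :: nat
  assumes "coprime p q" "coprime p' q'" "p * q' = p' * q" "q > 0" "q' > 0"
  shows "p = p' \<and> q = q'"
proof -
  have "q dvd p * q'" using assms(3) by simp
  hence "q dvd q'" using assms(1) by (metis coprime_commute coprime_dvd_mult_right_iff)
  moreover have "q' dvd p' * q" using assms(3) by (metis dvd_triv_right)
  hence "q' dvd q" using assms(2) by (metis coprime_commute coprime_dvd_mult_right_iff)
  ultimately have "q = q'" by (rule dvd_antisym)
  thus ?thesis using assms(3,4) by simp
qed

definition TT :: "nat \<Rightarrow> nat \<Rightarrow> ((nat \<times> nat) \<times> nat) set" where
  "TT M b = Sigma {x\<in>RR M b. coprime (fst x) (snd x)} (\<lambda>x. {0..M - snd x})"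

definition FF :: "real \<Rightarrow> nat \<Rightarrow> (nat \<times> nat) \<times> nat \<Rightarrow> int list" where
  "FF e M y = (case y of ((p,q),t) \<Rightarrow> wd (al e p q) (be e p q t) M)"

lemma TT_mem: "((p,q),t) \<in> TT M b \<longleftrightarrow> 1 \<le> p \<and> p < q \<and> q \<le> M \<and> b*q \<le> M*p \<and> coprime p q \<and> t \<le> M - q"
  unfolding TT_def RR_def by auto

lemma FF_inj:
  assumes e: "0 < e" "e * (real M)^2 < 1/2"
  shows "inj_on (FF e M) (TT M b)"
proof (rule inj_onI)
  fix y1 y2 assume y1: "y1 \<in> TT M b" and y2: "y2 \<in> TT M b" and eq: "FF e M y1 = FF e M y2"
  obtain p q t where y1d: "y1 = ((p,q),t)" by (metis prod.exhaust)
  obtain p' q' t' where y2d: "y2 = ((p',q'),t')" by (metis prod.exhaust)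
  have c1: "1 \<le> p" "p < q" "q \<le> M" "coprime p q" "t + q \<le> M" using y1 y1d TT_mem by auto
  have c2: "1 \<le> p'" "p' < q'" "q' \<le> M" "coprime p' q'" "t' + q' \<le> M" using y2 y2d TT_mem by auto
  have W: "wd (al e p q) (be e p q t) M = wd (al e p' q') (be e p' q' t') M"
    using eq y1d y2d by (simp add: FF_def)
  have Mr: "real M \<ge> 1" using c1 by simp
  have E1: "(real M)^2 * e < 1/2" using e(2) by (simp add: mult.commute)
  have qe2: "real q * e < 2"
  proof -
    have "real q * e \<le> real M * e" using c1 e by simp
    also have "\<dots> \<le> (real M)^2 * e" using Mr e by (simp add: power2_eq_square)
    finally show ?thesis using E1 by linarith
  qed
  have qe2': "real q' * e < 2"
  proof -
    have "real q' * e \<le> real M * e" using c2 e by simp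
    also have "\<dots> \<le> (real M)^2 * e" using Mr e by (simp add: power2_eq_square)
    finally show ?thesis using E1 by linarith
  qed
  have cross: "p * q' \<le> p' * q"
    if W: "wd (al e p q) (be e p q t) M = wd (al e p' q') (be e p' q' t') M"
      and c1: "1 \<le> p" "p < q" "q \<le> M" "t + q \<le> M" and c2: "1 \<le> p'" "p' < q'" "q' \<le> M"
      and qe: "real q * e < 2"
    for p q t p' q' t'
  proof -
    have "fl (al e p q) (be e p q t) (int t + int q) - fl (al e p q) (be e p q t) (int t) = int p + 1"
      using c1 e qe by (intro D_a) auto
    moreover have "fl (al e p q) (be e p q t) (int (t + q)) - fl (al e p q) (be e p q t) (int t)
        = fl (al e p' q') (be e p' q' t') (int (t + q)) - fl (al e p' q') (be e p' q' t') (int t)"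
      using W c1 by (intro wd_eq_diff2) auto
    ultimately have "fl (al e p' q') (be e p' q' t') (int t + int q) - fl (al e p' q') (be e p' q' t') (int t) = int p + 1"
      by simp
    hence lt: "real p < real q * al e p' q'" by (rule D_b)
    have q'0: "real q' > 0" using c2 by simp
    have "real p * real q' < real q * al e p' q' * real q'" using lt q'0 by simp
    also have "real q * al e p' q' * real q' = real q * real p' + real q * real q' * e"
      unfolding al_def using q'0 by (simp add: field_simps)
    also have "real q * real q' * e \<le> (real M)^2 * e"
    proof -
      have "real q * real q' \<le> real M * real M" using c1 c2 by (intro mult_mono) auto
      thus ?thesis using e by (simp add: power2_eq_square)
    qed
    finally have "real p * real q' < real q * real p' + 1" using E1 by simp
    hence "real (p * q') < real (p' * q) + 1" by (simp add: mult.commute)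
    hence "p * q' < p' * q + 1" by (metis of_nat_1 of_nat_add of_nat_less_iff)
    thus ?thesis by simp
  qed
  have x1: "p * q' \<le> p' * q" using cross[OF W c1(1-3) c1(5) c2(1-3) qe2] .
  have x2: "p' * q \<le> p * q'" using cross[OF W[symmetric] c2(1-3) c2(5) c1(1-3) qe2'] .
  have pq: "p = p' \<and> q = q'"
    using coprime_cross_eq[OF c1(4) c2(4)] x1 x2 c1 c2 by simp
  have Da: "fl (al e p q) (be e p q t) (int t + int q) - fl (al e p q) (be e p q t) (int t) = int p + 1"
    using c1 e qe2 by (intro D_a) auto
  have "fl (al e p q) (be e p q t) (int (t + q)) - fl (al e p q) (be e p q t) (int t)
      = fl (al e p q) (be e p q t') (int (t + q)) - fl (al e p q) (be e p q t') (int t)"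
    using W pq c1 by (intro wd_eq_diff2) auto
  hence h: "fl (al e p q) (be e p q t') (int t + int q) - fl (al e p q) (be e p q t') (int t) = int p + 1"
    using Da by simp
  have "t = t'"
    using D_c[OF c1(4) _ c1(3) _ c1(5) e h] c1 c2 pq by auto
  thus "y1 = y2" using y1d y2d pq by simp
qed


lemma FF_in_H:
  assumes e: "0 < e" "e * (real M)^2 < 1/2" "e \<notin> \<rat>" and y: "y \<in> TT M b"
  shows "FF e M y \<in> {w. sturmian_factor w \<and> length w = M \<and> b \<le> length (filter (\<lambda>x. x = 1) w)}"
proof -
  obtain p q t where yd: "y = ((p,q),t)" by (metis prod.exhaust)
  have c: "1 \<le> p" "p < q" "q \<le> M" "b*q \<le> M*p" using y yd TT_mem by auto
  define a where "a = al e p q"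
  define bb where "bb = be e p q t"
  have Mr: "real M \<ge> 1" using c by simp
  have qpos: "real q > 0" using c by simp
  have E1: "(real M)^2 * e < 1/2" using e(2) by (simp add: mult.commute)
  have qe: "real q * e < 1"
  proof -
    have "real q * e \<le> real M * e" using c e by simp
    also have "\<dots> \<le> (real M)^2 * e" using Mr e by (simp add: power2_eq_square)
    finally show ?thesis using E1 by linarith
  qed
  have a0: "0 < a"
  proof -
    have "real p / real q \<ge> 0" by simp
    thus ?thesis using e unfolding a_def al_def by linarith
  qed
  have a1: "a < 1"
  proof -
    have "real q * a = real p + real q * e" unfolding a_def using q_al c by simp
    also have "\<dots> < real p + 1" using qe by simp
    also have "\<dots> \<le> real q" using c by simp
    finally show ?thesis using qpos by simp
  qed
  have airr: "a \<notin> \<rat>"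
  proof
    assume "a \<in> \<rat>"
    hence "a - real p / real q \<in> \<rat>" by (intro Rats_diff Rats_divide) auto
    thus False using e(3) unfolding a_def al_def by simp
  qed
  have b0: "0 \<le> bb" "bb < 1" unfolding bb_def be_def
    using ceiling_correct[of "real t * al e p q + real q * e / 2"] by linarith+
  have fac: "sturmian_factor (wd a bb M)" by (rule wd_factor[OF a0 a1 airr b0])
  have ones: "int (length (filter (\<lambda>x. x = 1) (wd a bb M))) = fl a bb (int M) - fl a bb 0"
    using count_ones[OF factor_letters[OF fac]] wd_sum by simp
  have f0: "fl a bb 0 = 0" unfolding fl_def using b0 by (simp add: floor_eq_iff)
  have "real b \<le> real M * a"
  proof -
    have "real b * real q \<le> real M * real p" using c(4) by (metis of_nat_le_iff of_nat_mult)
    hence "real b \<le> real M * (real p / real q)" using qpos by (simp add: field_simps)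
    also have "\<dots> \<le> real M * a" unfolding a_def al_def using e by (intro mult_left_mono) auto
    finally show ?thesis .
  qed
  hence "real_of_int (int b) \<le> real_of_int (int M) * a + bb" using b0 by simp
  hence "int b \<le> fl a bb (int M)" unfolding fl_def by (simp add: le_floor_iff)
  hence "b \<le> length (filter (\<lambda>x. x = 1) (wd a bb M))" using ones f0 by simp
  thus ?thesis using fac yd unfolding FF_def a_def bb_def by simp
qed

lemma card_TT: "real (card (TT M b)) = (\<Sum>x\<in>RR M b. if coprime (fst x) (snd x) then real M + 1 - real (snd x) else 0)"
proof -
  have fin: "finite {x\<in>RR M b. coprime (fst x) (snd x)}" using RR_finite by simp
  have "card (TT M b) = (\<Sum>x\<in>{x\<in>RR M b. coprime (fst x) (snd x)}. card {0..M - snd x})"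
    unfolding TT_def using fin by (simp add: card_SigmaI)
  hence "real (card (TT M b)) = (\<Sum>x\<in>{x\<in>RR M b. coprime (fst x) (snd x)}. real M + 1 - real (snd x))"
  proof -
    assume h: "card (TT M b) = (\<Sum>x\<in>{x\<in>RR M b. coprime (fst x) (snd x)}. card {0..M - snd x})"
    have "real (card (TT M b)) = (\<Sum>x\<in>{x\<in>RR M b. coprime (fst x) (snd x)}. real (card {0..M - snd x}))"
      unfolding h by simp
    also have "\<dots> = (\<Sum>x\<in>{x\<in>RR M b. coprime (fst x) (snd x)}. real M + 1 - real (snd x))"
    proof (rule sum.cong[OF refl])
      fix x assume "x \<in> {x\<in>RR M b. coprime (fst x) (snd x)}"
      hence "snd x \<le> M" by (auto simp: RR_def)
      thus "real (card {0..M - snd x}) = real M + 1 - real (snd x)" by (simp add: of_nat_diff)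
    qed
    finally show ?thesis .
  qed
  also have "\<dots> = (\<Sum>x\<in>RR M b. if coprime (fst x) (snd x) then real M + 1 - real (snd x) else 0)"
    by (rule sum.inter_filter) (rule RR_finite)
  finally show ?thesis .
qed

lemma H_lower:
  assumes M1: "M \<ge> 1" and b: "b \<le> M"
  shows "real (H M b) \<ge> (real M - real b) * (real M)^2 / pi^2 - 5 * (real M)^2 * harm M"
proof -
  have r: "1 / (2 * (real M)^2) > 0" using M1 by simp
  obtain e where e: "0 < e" "e < 1 / (2 * (real M)^2)" "e \<notin> \<rat>" using exists_irrational[OF r] by blast
  have e2: "e * (real M)^2 < 1/2" using e(2) M1 by (simp add: field_simps)
  define S where "S = {w. sturmian_factor w \<and> length w = M \<and> b \<le> length (filter (\<lambda>x. x = 1) w)}"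
  have sub: "FF e M ` TT M b \<subseteq> S" unfolding S_def using FF_in_H[OF e(1) e2 e(3)] by auto
  have "card (TT M b) = card (FF e M ` TT M b)" using FF_inj[OF e(1) e2] by (simp add: card_image)
  also have "\<dots> \<le> card S" using sub H_set_finite unfolding S_def by (intro card_mono) auto
  finally have "card (TT M b) \<le> H M b" unfolding S_def H_def .
  hence "real (card (TT M b)) \<le> real (H M b)" by simp
  thus ?thesis using T_bound[OF M1 b] card_TT[of M b] by linarith
qed


theorem mainTheorem8:
  fixes \<delta> :: real
  assumes "\<delta> > 0"
  shows "\<exists>K::real. \<forall>M b::nat. 1 \<le> M \<longrightarrow> b \<le> M \<longrightarrow>
           real (H M b) \<ge> (1 / pi^2) * (real M - real b) * (real M)^2 - K * (real M) powr (2 + \<delta>)"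
proof (intro exI allI impI)
  fix M b :: nat assume M1: "1 \<le> M" and b: "b \<le> M"
  define K where "K = 5 * (1 + 1 / \<delta>)"
  have Mr: "real M \<ge> 1" using M1 by simp
  have P1: "real M powr \<delta> \<ge> 1" using Mr assms by (intro ge_one_powr_ge_zero) auto
  have hl: "harm M \<le> ln (real M) + 1" using harm_le_ln[OF M1] .
  have lnb: "ln (real M) \<le> real M powr \<delta> / \<delta>" using ln_powr_bound[OF Mr assms] .
  have "harm M \<le> real M powr \<delta> + real M powr \<delta> / \<delta>" using hl lnb P1 by linarith
  also have "\<dots> = (1 + 1/\<delta>) * real M powr \<delta>" by (simp add: algebra_simps)
  finally have hb: "harm M \<le> (1 + 1/\<delta>) * real M powr \<delta>" .
  have pw: "real M powr (2 + \<delta>) = (real M)^2 * real M powr \<delta>"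
    using Mr by (simp add: powr_add)
  have M2: "(real M)^2 \<ge> 0" by simp
  have "5 * (real M)^2 * harm M \<le> 5 * (real M)^2 * ((1 + 1/\<delta>) * real M powr \<delta>)"
    using hb M2 by (intro mult_left_mono) auto
  also have "\<dots> = K * real M powr (2 + \<delta>)" unfolding pw K_def by (simp add: algebra_simps)
  finally have err: "5 * (real M)^2 * harm M \<le> K * real M powr (2 + \<delta>)" .
  have "(1 / pi^2) * (real M - real b) * (real M)^2 = (real M - real b) * (real M)^2 / pi^2" by simp
  thus "real (H M b) \<ge> (1 / pi^2) * (real M - real b) * (real M)^2 - (5 * (1 + 1 / \<delta>)) * (real M) powr (2 + \<delta>)"
    using H_lower[OF M1 b] err unfolding K_def by linarith
qed

end
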